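(* Let $f\in K[z]$ be a polynomial of degree at least $2$ and let $\mu$ be an $f$-invariant Radon probability measure on $J(f)$. If $\log_p f^\#$ is $\mu$-integrable, then $$L(f,\mu)=\int_{\mathsf{P}^1}\log_p\|f'\|_\xi\,d\mu(\xi).$$
   Context: $K$ is an algebraically closed field of characteristic $0$, complete with respect to a nontrivial nonarchimedean absolute value. Set $p=\mathrm{res.char}(K)$ if positive and $p=e$ otherwise; $\log_p$ is the logarithm to base $p$. $\mathsf{P}^1$ is the Berkovich projective line over $K$, $\mathsf{A}^1=\mathsf{P}^1\setminus\{\infty\}$; $\|g\|_\xi$ is the value at $g\in K[z]$ of the seminorm $\xi\in\mathsf{A}^1$. $\mathcal{K}(f)$ is the set of $\xi\in\mathsf{A}^1$ with $f^n(\xi)\not\to\infty$, $J(f)=\partial\mathcal{K}(f)$. The chordal derivative is $f^\#(\xi)=\frac{\max(1,\|z\|_\xi)^2}{\max(1,\|f\|_\xi)^2}\|f'\|_\xi$, and $L(f,\mu)=\int\log_p f^\#\,d\mu$. *)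

theory Defs
  imports "HOL-Analysis.Analysis" "HOL-Probability.Probability"
    "HOL-Computational_Algebra.Polynomial"
begin

definition nonarch_abs :: "('k::field_char_0 \<Rightarrow> real) \<Rightarrow> bool" where
  "nonarch_abs absv \<longleftrightarrow>
     (\<forall>x. absv x \<ge> 0) \<and> (\<forall>x. absv x = 0 \<longleftrightarrow> x = 0) \<and>
     (\<forall>x y. absv (x * y) = absv x * absv y) \<and>
     (\<forall>x y. absv (x + y) \<le> max (absv x) (absv y))"

definition nontrivial_abs :: "('k::field_char_0 \<Rightarrow> real) \<Rightarrow> bool" where
  "nontrivial_abs absv \<longleftrightarrow> (\<exists>x. x \<noteq> 0 \<and> absv x \<noteq> 1)"

definition complete_abs :: "('k::field_char_0 \<Rightarrow> real) \<Rightarrow> bool" where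
  "complete_abs absv \<longleftrightarrow>
     (\<forall>X::nat \<Rightarrow> 'k. (\<forall>e>0. \<exists>N. \<forall>m\<ge>N. \<forall>n\<ge>N. absv (X m - X n) < e) \<longrightarrow>
        (\<exists>L. \<forall>e>0. \<exists>N. \<forall>n\<ge>N. absv (X n - L) < e))"

definition alg_closed :: "'k::field itself \<Rightarrow> bool" where
  "alg_closed _ \<longleftrightarrow> (\<forall>q::'k poly. degree q \<ge> 1 \<longrightarrow> (\<exists>x. poly q x = 0))"

text \<open>p = residue characteristic if positive, and e otherwise.  The residue field
  has positive characteristic n iff absv (of_nat n) < 1 for some n > 0; the
  characteristic is then the least such n.\<close>

definition res_p :: "('k::field_char_0 \<Rightarrow> real) \<Rightarrow> real" where
  "res_p absv = (if \<exists>n::nat. n > 0 \<and> absv (of_nat n) < 1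
                 then real (LEAST n::nat. n > 0 \<and> absv (of_nat n) < 1)
                 else exp 1)"

definition berkA1 :: "('k::field_char_0 \<Rightarrow> real) \<Rightarrow> ('k poly \<Rightarrow> real) set" where
  "berkA1 absv = {s. (\<forall>g. s g \<ge> 0) \<and>
                     (\<forall>g h. s (g + h) \<le> s g + s h) \<and>
                     (\<forall>g h. s (g * h) = s g * s h) \<and>
                     (\<forall>c. s [:c:] = absv c)}"

definition berkA1_top :: "('k::field_char_0 \<Rightarrow> real) \<Rightarrow> ('k poly \<Rightarrow> real) topology" where
  "berkA1_top absv = topology_generated_by
     {{s \<in> berkA1 absv. s g \<in> U} | g U. open U}"

text \<open>Points of P^1 = A^1 \<union> {\<infinity>}: Some s for s in A^1, None for \<infinity>.
  Topology: one-point compactification of A^1.\<close>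

type_synonym 'k berk = "('k poly \<Rightarrow> real) option"

definition berkP1 :: "('k::field_char_0 \<Rightarrow> real) \<Rightarrow> 'k berk set" where
  "berkP1 absv = insert None (Some ` berkA1 absv)"

definition berkP1_top :: "('k::field_char_0 \<Rightarrow> real) \<Rightarrow> 'k berk topology" where
  "berkP1_top absv = topology_generated_by
     ({Some ` U | U. openin (berkA1_top absv) U} \<union>
      {insert None (Some ` (berkA1 absv - C)) | C. compactin (berkA1_top absv) C})"

text \<open>Value \<parallel>g\<parallel>_\<xi> (only meaningful for \<xi> \<in> A^1; junk value 0 at \<infinity>).\<close>

definition bnorm :: "'k::field_char_0 berk \<Rightarrow> 'k poly \<Rightarrow> real" where
  "bnorm \<xi> g = (case \<xi> of Some s \<Rightarrow> s g | None \<Rightarrow> 0)"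

definition berk_map :: "'k::field_char_0 poly \<Rightarrow> 'k berk \<Rightarrow> 'k berk" where
  "berk_map f \<xi> = (case \<xi> of Some s \<Rightarrow> Some (\<lambda>g. s (pcompose g f)) | None \<Rightarrow> None)"

definition filled_julia ::
  "('k::field_char_0 \<Rightarrow> real) \<Rightarrow> 'k poly \<Rightarrow> 'k berk set" where
  "filled_julia absv f = {\<xi> \<in> Some ` berkA1 absv.
      \<not> limitin (berkP1_top absv) (\<lambda>n. (berk_map f ^^ n) \<xi>) None sequentially}"

definition julia :: "('k::field_char_0 \<Rightarrow> real) \<Rightarrow> 'k poly \<Rightarrow> 'k berk set" where
  "julia absv f = (berkP1_top absv) frontier_of (filled_julia absv f)"

text \<open>Chordal derivative f^# on A^1 (junk value 0 at \<infinity>).\<close>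

definition chordal_deriv :: "'k::field_char_0 poly \<Rightarrow> 'k berk \<Rightarrow> real" where
  "chordal_deriv f \<xi> =
     (case \<xi> of None \<Rightarrow> 0
      | Some s \<Rightarrow> (max 1 (s [:0, 1:]))\<^sup>2 / (max 1 (s f))\<^sup>2 * s (pderiv f))"

definition borel_sets_of :: "'a topology \<Rightarrow> 'a set set" where
  "borel_sets_of X = sigma_sets (topspace X) {U. openin X U}"

definition radon_prob :: "'a topology \<Rightarrow> 'a measure \<Rightarrow> bool" where
  "radon_prob X \<mu> \<longleftrightarrow> prob_space \<mu> \<and> space \<mu> = topspace X \<and>
     sets \<mu> = borel_sets_of X \<and>
     (\<forall>A \<in> sets \<mu>. emeasure \<mu> A =
        (SUP C \<in> {C. compactin X C \<and> C \<subseteq> A}. emeasure \<mu> C))"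

definition invariant_measure :: "('a \<Rightarrow> 'a) \<Rightarrow> 'a measure \<Rightarrow> bool" where
  "invariant_measure F \<mu> \<longleftrightarrow>
     (\<forall>A \<in> sets \<mu>. emeasure \<mu> (F -` A \<inter> space \<mu>) = emeasure \<mu> A)"

end

theory Submission
  imports Defs
begin

lemma absv_basic:
  assumes "nonarch_abs absv"
  shows "absv 0 = 0" "absv 1 = 1" "absv (-x) = absv x" "absv x \<ge> 0"
proof -
  have nn: "\<And>x. absv x \<ge> 0" and z: "\<And>x. absv x = 0 \<longleftrightarrow> x = 0"
    and m: "\<And>x y. absv (x*y) = absv x * absv y" using assms unfolding nonarch_abs_def by auto
  show "absv 0 = 0" using z by simp
  have "absv 1 = absv 1 * absv 1" using m[of 1 1] by simp
  moreover have "absv 1 \<noteq> 0" using z by simp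
  ultimately show one: "absv 1 = 1" by (metis mult_cancel_right2)
  have "absv (-1) * absv (-1) = 1" using m[of "-1" "-1"] one by simp
  hence "(absv (-1))^2 = 1" by (simp add: power2_eq_square)
  hence "absv (-1) = 1" using nn[of "-1"] by (simp add: power2_eq_1_iff)
  thus "absv (-x) = absv x" using m[of "-1" x] by simp
  show "absv x \<ge> 0" by (rule nn)
qed

lemma A1_basic:
  assumes "s \<in> berkA1 absv" "nonarch_abs absv"
  shows "s 0 = 0" "s 1 = 1" "s (p^i) = (s p)^i" "s (monom c i) = absv c * (s [:0,1:])^i"
    "s g \<ge> 0" "s (g + h) \<le> s g + s h" "s (g*h) = s g * s h" "s [:c:] = absv c"
proof -
  have nn: "\<And>g. s g \<ge> 0" and sa: "\<And>g h. s (g + h) \<le> s g + s h"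
    and m: "\<And>g h. s (g * h) = s g * s h" and c: "\<And>c. s [:c:] = absv c"
    using assms(1) unfolding berkA1_def by auto
  show "s g \<ge> 0" "s (g + h) \<le> s g + s h" "s (g*h) = s g * s h" "s [:c:] = absv c"
    using nn sa m c by auto
  show "s 0 = 0" using c[of 0] absv_basic[OF assms(2)] by simp
  show one: "s 1 = 1" using c[of 1] absv_basic[OF assms(2)] by (simp add: one_pCons)
  show pw: "\<And>p i. s (p^i) = (s p)^i"
  proof -
    fix p :: "'a poly" and i :: nat show "s (p^i) = (s p)^i"
      by (induction i) (simp_all add: one m)
  qed
  show "s (monom c i) = absv c * (s [:0,1:])^i"
  proof -
    have "monom c i = [:c:] * [:0,1:]^i" by (simp add: monom_altdef)
    thus ?thesis by (simp only: m c pw)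
  qed
qed

lemma A1_sum:
  assumes "s \<in> berkA1 absv" "nonarch_abs absv" "finite A"
  shows "s (sum F A) \<le> (\<Sum>i\<in>A. s (F i))"
  using assms(3)
proof (induction A rule: finite_induct)
  case empty then show ?case using A1_basic[OF assms(1,2)] by simp
next
  case (insert x A)
  have "s (sum F (insert x A)) = s (F x + sum F A)" using insert by simp
  also have "\<dots> \<le> s (F x) + s (sum F A)" by (rule A1_basic(6)[OF assms(1,2)])
  also have "\<dots> \<le> s (F x) + (\<Sum>i\<in>A. s (F i))" using insert by simp
  finally show ?case using insert by simp
qed

definition Sabs :: "('k::field_char_0 \<Rightarrow> real) \<Rightarrow> 'k poly \<Rightarrow> nat \<Rightarrow> real" where
  "Sabs absv p D = (\<Sum>i\<le>D. absv (coeff p i))"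

lemma A1_poly_bound:
  assumes "s \<in> berkA1 absv" "nonarch_abs absv" "degree p \<le> D"
  shows "s p \<le> Sabs absv p D * (max 1 (s [:0,1:]))^D"
proof -
  let ?t = "s [:0,1:]" let ?m = "max 1 ?t"
  have "s p = s (\<Sum>i\<le>D. monom (coeff p i) i)" using poly_as_sum_of_monoms'[OF assms(3)] by simp
  also have "\<dots> \<le> (\<Sum>i\<le>D. s (monom (coeff p i) i))" by (rule A1_sum[OF assms(1,2)]) simp
  also have "\<dots> = (\<Sum>i\<le>D. absv (coeff p i) * ?t^i)" using A1_basic(4)[OF assms(1,2)] by simp
  also have "\<dots> \<le> (\<Sum>i\<le>D. absv (coeff p i) * ?m^D)"
  proof (rule sum_mono)
    fix i assume "i \<in> {..D}"
    hence iD: "i \<le> D" by simp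
    have t0: "?t \<ge> 0" using A1_basic(5)[OF assms(1,2)] by simp
    have "?t^i \<le> ?m^i" by (rule power_mono) (use t0 in auto)
    also have "\<dots> \<le> ?m^D" by (rule power_increasing[OF iD]) simp
    finally show "absv (coeff p i) * ?t^i \<le> absv (coeff p i) * ?m^D"
      by (rule mult_left_mono) (use absv_basic(4)[OF assms(2)] in auto)
  qed
  also have "\<dots> = Sabs absv p D * ?m^D" unfolding Sabs_def by (simp add: sum_distrib_right)
  finally show ?thesis .
qed

lemma A1_neg: assumes "s \<in> berkA1 absv" "nonarch_abs absv" shows "s (-g) = s g"
proof -
  have "-g = [:-1:] * g" by simp
  hence "s (-g) = absv (-1) * s g" using A1_basic(7,8)[OF assms] by metis
  thus ?thesis using absv_basic(2,3)[OF assms(2)] by simp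
qed

lemma A1_lower:
  assumes "s \<in> berkA1 absv" "nonarch_abs absv" "degree f = n" "n \<ge> 1"
  shows "absv (lead_coeff f) * (s [:0,1:])^n \<le> s f + Sabs absv f (n-1) * (max 1 (s [:0,1:]))^(n-1)"
proof -
  define g where "g = f - monom (lead_coeff f) n"
  have cg: "coeff g i = (if i = n then 0 else coeff f i)" for i
    unfolding g_def using assms(3) by (auto simp: coeff_monom)
  have dg: "degree g \<le> n - 1"
  proof (rule degree_le, intro allI impI)
    fix i assume "n - 1 < i"
    hence "i = n \<or> i > n" by auto
    thus "coeff g i = 0" using cg assms(3) coeff_eq_0 by auto
  qed
  have Seq: "Sabs absv g (n-1) = Sabs absv f (n-1)"
    unfolding Sabs_def using cg assms(4) by (intro sum.cong) auto
  have "monom (lead_coeff f) n = f + (-g)" unfolding g_def by simp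
  hence "s (monom (lead_coeff f) n) \<le> s f + s (-g)" using A1_basic(6)[OF assms(1,2)] by metis
  also have "s (-g) = s g" by (rule A1_neg[OF assms(1,2)])
  also have "s g \<le> Sabs absv f (n-1) * (max 1 (s [:0,1:]))^(n-1)"
    using A1_poly_bound[OF assms(1,2) dg] Seq by simp
  finally show ?thesis using A1_basic(4)[OF assms(1,2)] by simp
qed

lemma key_bound:
  assumes na: "nonarch_abs absv" and df: "degree f = n" and n1: "n \<ge> 1"
  shows "\<exists>A>0. \<exists>B>0. \<forall>s\<in>berkA1 absv.
     s (pderiv f) \<le> A * (max 1 (s [:0,1:]))^(n-1) \<and> B * (max 1 (s [:0,1:]))^n \<le> max 1 (s f)"
proof -
  define A where "A = Sabs absv (pderiv f) (n-1) + 1"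
  define a where "a = absv (lead_coeff f)"
  define S where "S = Sabs absv f (n-1)"
  define R where "R = max 1 (2 * S / a)"
  define B where "B = min (a/2) (1 / R^n)"
  have S0: "S \<ge> 0" unfolding S_def Sabs_def using absv_basic(4)[OF na] by (simp add: sum_nonneg)
  have A0: "A > 0" unfolding A_def Sabs_def using absv_basic(4)[OF na]
    by (smt (verit) sum_nonneg)
  have "f \<noteq> 0" using df n1 by auto
  hence a0: "a > 0" unfolding a_def using na absv_basic(4)[OF na] unfolding nonarch_abs_def
    by (metis leading_coeff_0_iff less_eq_real_def)
  have R1: "R \<ge> 1" unfolding R_def by simp
  have B0: "B > 0" unfolding B_def using a0 R1 by simp
  show ?thesis
  proof (intro exI conjI ballI allI)
    show "A > 0" "B > 0" by (fact A0, fact B0)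
    fix s assume s: "s \<in> berkA1 absv"
    let ?t = "s [:0,1:]" let ?m = "max 1 ?t"
    have t0: "?t \<ge> 0" using A1_basic(5)[OF s na] .
    have "degree (pderiv f) \<le> n - 1" using df by (simp add: degree_pderiv)
    from A1_poly_bound[OF s na this]
    have "s (pderiv f) \<le> Sabs absv (pderiv f) (n-1) * ?m^(n-1)" .
    also have "\<dots> \<le> A * ?m^(n-1)" unfolding A_def by (intro mult_right_mono) auto
    finally show "s (pderiv f) \<le> A * ?m^(n-1)" .
    show "B * ?m^n \<le> max 1 (s f)"
    proof (cases "?t \<ge> R")
      case True
      hence mt: "?m = ?t" using R1 by simp
      have low: "a * ?t^n \<le> s f + S * ?t^(n-1)"
        using A1_lower[OF s na df n1] mt unfolding a_def S_def by simp
      have "S \<le> a * ?t / 2" using True a0 unfolding R_def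
      proof -
        have "2 * S / a \<le> ?t" using True unfolding R_def by simp
        hence "2 * S \<le> ?t * a" using a0 by (simp add: divide_le_eq)
        thus ?thesis by (simp add: mult.commute)
      qed
      hence "S * ?t^(n-1) \<le> (a * ?t / 2) * ?t^(n-1)" by (rule mult_right_mono) (use t0 in simp)
      also have "\<dots> = a * ?t^n / 2" using n1 by (simp add: power_eq_if)
      finally have "a * ?t^n / 2 \<le> s f" using low by simp
      moreover have "B * ?t^n \<le> a / 2 * ?t^n" unfolding B_def by (intro mult_right_mono) (use t0 in auto)
      ultimately have "B * ?t^n \<le> s f" by simp
      thus ?thesis using mt by simp
    next
      case False
      hence "?m \<le> R" using R1 by simp
      hence "?m^n \<le> R^n" by (rule power_mono) simp
      moreover have "B \<le> 1 / R^n" unfolding B_def by simp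
      ultimately have "B * ?m^n \<le> 1 / R^n * R^n"
        by (intro mult_mono) (use B0 R1 in auto)
      also have "\<dots> = 1" using R1 by simp
      finally show ?thesis by simp
    qed
  qed
qed

lemma topspace_P1: "topspace (berkP1_top absv) = berkP1 absv"
proof -
  have tA: "topspace (berkA1_top absv) \<subseteq> berkA1 absv"
  proof -
    have "topspace (berkA1_top absv) = \<Union> {{s \<in> berkA1 absv. s g \<in> U} | g U. open U}"
      unfolding berkA1_top_def by (rule topology_generated_by_topspace)
    also have "\<dots> \<subseteq> berkA1 absv" by (rule Union_least) auto
    finally show ?thesis .
  qed
  define S1 where "S1 = {Some ` U |U. openin (berkA1_top absv) U}"
  define S2 where "S2 = {insert None (Some ` (berkA1 absv - C)) |C. compactin (berkA1_top absv) C}"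
  have "topspace (berkP1_top absv) = \<Union> (S1 \<union> S2)"
    unfolding berkP1_top_def S1_def S2_def by (rule topology_generated_by_topspace)
  also have "\<dots> = berkP1 absv"
  proof (rule equalityI)
    show "\<Union> (S1 \<union> S2) \<subseteq> berkP1 absv"
    proof (rule Union_least)
      fix X assume "X \<in> S1 \<union> S2"
      then consider U where "X = Some ` U" "openin (berkA1_top absv) U"
        | C where "X = insert None (Some ` (berkA1 absv - C))" unfolding S1_def S2_def by blast
      thus "X \<subseteq> berkP1 absv"
      proof cases
        case 1
        hence "U \<subseteq> berkA1 absv" using openin_subset tA by blast
        thus ?thesis using 1 unfolding berkP1_def by blast
      next
        case 2 thus ?thesis unfolding berkP1_def by blast
      qed
    qed
    have "compactin (berkA1_top absv) {}" by simp
    hence "insert None (Some ` (berkA1 absv - {})) \<in> S2" unfolding S2_def by blast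
    thus "berkP1 absv \<subseteq> \<Union> (S1 \<union> S2)" unfolding berkP1_def by auto
  qed
  finally show ?thesis .
qed
lemma bnorm_meas:
  assumes "radon_prob (berkP1_top absv) \<mu>"
  shows "(\<lambda>\<xi>. bnorm \<xi> g) \<in> borel_measurable \<mu>"
proof -
  have sp: "space \<mu> = berkP1 absv" and st: "sets \<mu> = borel_sets_of (berkP1_top absv)"
    using assms unfolding radon_prob_def topspace_P1 by blast+
  have nn: "\<xi> \<in> space \<mu> \<Longrightarrow> bnorm \<xi> g \<ge> 0" for \<xi>
    using sp unfolding berkP1_def berkA1_def bnorm_def by (auto split: option.split)
  show ?thesis unfolding borel_measurable_iff_greater
  proof
    fix a :: real
    show "{w \<in> space \<mu>. a < bnorm w g} \<in> sets \<mu>"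
    proof (cases "a < 0")
      case True
      have "\<forall>w\<in>space \<mu>. a < bnorm w g" using nn True by (metis less_le_trans)
      hence "{w \<in> space \<mu>. a < bnorm w g} = space \<mu>" by blast
      thus ?thesis by simp
    next
      case False
      define U where "U = {s \<in> berkA1 absv. s g \<in> {a<..}}"
      have eq: "{w \<in> space \<mu>. a < bnorm w g} = Some ` U"
      proof (rule set_eqI)
        fix w show "w \<in> {w \<in> space \<mu>. a < bnorm w g} \<longleftrightarrow> w \<in> Some ` U"
        proof (cases w)
          case None thus ?thesis using False by (simp add: bnorm_def)
        next
          case (Some s) thus ?thesis unfolding sp U_def berkP1_def by (simp add: bnorm_def image_iff)
        qed
      qed
      have "U \<in> {{s \<in> berkA1 absv. s g \<in> V} | g V. open V}"
        unfolding U_def by (rule CollectI, rule exI[of _ g], rule exI[of _ "{a<..}"]) simp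
      hence "openin (berkA1_top absv) U" unfolding berkA1_top_def
        by (rule topology_generated_by_Basis)
      hence "Some ` U \<in> {Some ` U |U. openin (berkA1_top absv) U}"
        by (intro CollectI exI[of _ U] conjI refl)
      hence "openin (berkP1_top absv) (Some ` U)" unfolding berkP1_top_def
        by (intro topology_generated_by_Basis UnI1)
      hence "Some ` U \<in> sets \<mu>" unfolding st borel_sets_of_def
        by (intro sigma_sets.Basic) simp
      thus ?thesis using eq by simp
    qed
  qed
qed

lemma res_p_gt1: assumes "nonarch_abs absv" shows "res_p absv > 1"
proof (cases "\<exists>n::nat. n > 0 \<and> absv (of_nat n) < 1")
  case True
  let ?n = "LEAST n::nat. n > 0 \<and> absv (of_nat n) < 1"
  have "?n > 0 \<and> absv (of_nat ?n) < 1" using LeastI_ex[OF True] .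
  moreover have "?n \<noteq> 1" using absv_basic(2)[OF assms] calculation by auto
  ultimately have "?n \<ge> 2" by linarith
  thus ?thesis unfolding res_p_def using True by simp
next
  case False
  hence "res_p absv = exp 1" unfolding res_p_def by (simp only: if_False)
  thus ?thesis by simp
qed

lemma berk_map_space:
  assumes "\<xi> \<in> berkP1 absv"
  shows "berk_map f \<xi> \<in> berkP1 absv"
proof (cases \<xi>)
  case None thus ?thesis using assms by (simp add: berk_map_def)
next
  case (Some s)
  hence s: "s \<in> berkA1 absv" using assms unfolding berkP1_def by auto
  have "(\<lambda>g. s (g \<circ>\<^sub>p f)) \<in> berkA1 absv"
    using s unfolding berkA1_def by (simp add: pcompose_add pcompose_mult)
  thus ?thesis using Some unfolding berk_map_def berkP1_def by simp
qed

lemma hF: "bnorm (berk_map f \<xi>) [:0,1:] = bnorm \<xi> f"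
  by (cases \<xi>) (simp_all add: berk_map_def bnorm_def pcompose_pCons)


lemma pointwise_bound:
  fixes s :: "'k::field_char_0 poly \<Rightarrow> real"
  assumes b1: "b > 1" and cp: "chordal_deriv f (Some s) > 0" and n2: "n \<ge> 2"
    and A0: "A > 0" and B0: "B > 0"
    and bA: "s (pderiv f) \<le> A * (max 1 (s [:0,1:]))^(n-1)"
    and bB: "B * (max 1 (s [:0,1:]))^n \<le> max 1 (s f)"
  shows "log b (max 1 (s [:0,1:])) \<le> \<bar>log b (A / B^2) - log b (chordal_deriv f (Some s))\<bar>"
proof -
  define m where "m = max 1 (s [:0,1:])"
  define M where "M = max 1 (s f)"
  define q where "q = s (pderiv f)"
  define ch where "ch = chordal_deriv f (Some s)"
  have m1: "m \<ge> 1" and M1: "M \<ge> 1" unfolding m_def M_def by auto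
  have ch: "ch = m^2 / M^2 * q" unfolding ch_def m_def M_def q_def chordal_deriv_def by simp
  have ch0: "ch > 0" using cp ch_def by simp
  have q0: "q > 0"
  proof (rule ccontr)
    assume "\<not> q > 0"
    hence "q \<le> 0" by simp
    moreover have "m^2 / M^2 \<ge> 0" by simp
    ultimately have "ch \<le> 0" unfolding ch by (metis mult_nonneg_nonpos)
    thus False using ch0 by simp
  qed
  have qA: "q \<le> A * m^(n-1)" using bA unfolding q_def m_def .
  have BM: "B * m^n \<le> M" using bB unfolding m_def M_def .
  have mpos: "m > 0" using m1 by simp
  have e1: "ch * m^(n-1) = q * m^(n+1) / M^2"
  proof -
    have "m^2 * m^(n-1) = m^(n+1)" using n2 by (simp add: power_add[symmetric])
    thus ?thesis unfolding ch by (simp add: field_simps)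
  qed
  have "q * m^(n+1) \<le> A * m^(n-1) * m^(n+1)" using qA by (intro mult_right_mono) (use mpos in simp_all)
  also have "\<dots> = A * (m^n)^2"
  proof -
    have nn: "n-1+(n+1) = n*2" using n2 by simp
    have "m^(n-1) * m^(n+1) = m^(n-1+(n+1))" by (simp only: power_add)
    also have "\<dots> = (m^n)^2" by (simp only: nn power_mult)
    finally have "m^(n-1) * m^(n+1) = (m^n)^2" .
    thus ?thesis by simp
  qed
  finally have e2: "q * m^(n+1) \<le> A * (m^n)^2" .
  have Bm0: "B * m^n > 0" using B0 mpos by simp
  have "(B * m^n)^2 \<le> M^2" using BM Bm0 by (intro power_mono) simp_all
  have "ch * m^(n-1) \<le> A * (m^n)^2 / M^2" unfolding e1 using e2 M1 by (intro divide_right_mono) simp_all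
  also have "\<dots> \<le> A * (m^n)^2 / (B * m^n)^2"
  proof (rule divide_left_mono)
    show "(B * m^n)^2 \<le> M^2" by fact
    show "0 \<le> A * (m^n)^2" using A0 by simp
    have "M^2 > 0" using M1 by simp
    moreover have "(B * m^n)^2 > 0" using Bm0 by (simp only: zero_less_power)
    ultimately show "0 < M^2 * (B * m^n)^2" by (rule mult_pos_pos)
  qed
  also have "\<dots> = A / B^2" using mpos by (simp add: power_mult_distrib)
  finally have ineq: "ch * m^(n-1) \<le> A / B^2" .
  have pos1: "ch * m^(n-1) > 0" using ch0 mpos by simp
  have "log b (ch * m^(n-1)) \<le> log b (A / B^2)"
    using ineq pos1 A0 B0 b1 by (subst log_le_cancel_iff) simp_all
  moreover have "log b (ch * m^(n-1)) = log b ch + real (n-1) * log b m"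
    using b1 ch0 mpos by (simp add: log_mult log_nat_power)
  moreover have "log b m \<ge> 0" using b1 m1 by simp
  moreover have "real (n-1) \<ge> 1" using n2 by simp
  ultimately have "log b m \<le> log b (A / B^2) - log b ch"
    by (smt (verit) mult_le_cancel_right1)
  thus ?thesis unfolding m_def ch_def by linarith
qed

lemma pointwise_eq:
  fixes s :: "'k::field_char_0 poly \<Rightarrow> real"
  assumes b1: "b > 1" and cp: "chordal_deriv f (Some s) > 0"
  shows "log b (chordal_deriv f (Some s)) =
     2 * log b (max 1 (s [:0,1:])) - 2 * log b (max 1 (s f)) + log b (s (pderiv f))"
proof -
  define m where "m = max 1 (s [:0,1:])"
  define M where "M = max 1 (s f)"
  define q where "q = s (pderiv f)"
  have m1: "m \<ge> 1" and M1: "M \<ge> 1" unfolding m_def M_def by auto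
  have ch: "chordal_deriv f (Some s) = m^2 / M^2 * q" unfolding m_def M_def q_def chordal_deriv_def by simp
  have q0: "q > 0"
  proof (rule ccontr)
    assume "\<not> q > 0"
    hence "q \<le> 0" by simp
    moreover have "m^2 / M^2 \<ge> 0" by simp
    ultimately have "chordal_deriv f (Some s) \<le> 0" unfolding ch by (metis mult_nonneg_nonpos)
    thus False using cp by simp
  qed
  have "log b (m^2 / M^2 * q) = log b (m^2) - log b (M^2) + log b q"
    using b1 m1 M1 q0 by (simp add: log_mult log_divide)
  also have "\<dots> = 2 * log b m - 2 * log b M + log b q"
    using b1 m1 M1 by (simp add: log_nat_power)
  finally show ?thesis unfolding ch m_def M_def q_def .
qed


theorem lemma4p1:
  fixes absv :: "'k::field_char_0 \<Rightarrow> real"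
    and f :: "'k poly"
    and \<mu> :: "'k berk measure"
  assumes "nonarch_abs absv" and "nontrivial_abs absv" and "complete_abs absv"
    and "alg_closed TYPE('k)"
    and "degree f \<ge> 2"
    and "radon_prob (berkP1_top absv) \<mu>"
    and "invariant_measure (berk_map f) \<mu>"
    and "emeasure \<mu> (berkP1 absv - julia absv f) = 0"
    and "AE \<xi> in \<mu>. chordal_deriv f \<xi> > 0"
    and "integrable \<mu> (\<lambda>\<xi>. log (res_p absv) (chordal_deriv f \<xi>))"
  shows "(\<integral>\<xi>. log (res_p absv) (chordal_deriv f \<xi>) \<partial>\<mu>) =
         (\<integral>\<xi>. log (res_p absv) (bnorm \<xi> (pderiv f)) \<partial>\<mu>)"
proof -
  note na = assms(1)
  define b where "b = res_p absv"
  have b1: "b > 1" using res_p_gt1[OF na] b_def by simp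
  define z :: "'k poly" where "z = [:0,1:]"
  define h where "h = (\<lambda>\<xi>. log b (max 1 (bnorm \<xi> z)))"
  define k where "k = (\<lambda>\<xi>. log b (max 1 (bnorm \<xi> f)))"
  define c where "c = (\<lambda>\<xi>. log b (chordal_deriv f \<xi>))"
  define d where "d = (\<lambda>\<xi>. log b (bnorm \<xi> (pderiv f)))"
  have sp: "space \<mu> = berkP1 absv"
    using assms(6) unfolding radon_prob_def topspace_P1 by blast
  have ps: "prob_space \<mu>" using assms(6) unfolding radon_prob_def by blast
  interpret prob_space \<mu> by (rule ps)
  have bm: "(\<lambda>\<xi>. bnorm \<xi> g) \<in> borel_measurable \<mu>" for g by (rule bnorm_meas[OF assms(6)])
  have hm: "h \<in> borel_measurable \<mu>" unfolding h_def using bm[of z] by measurable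
  have km: "k \<in> borel_measurable \<mu>" unfolding k_def using bm[of f] by measurable
  have dm: "d \<in> borel_measurable \<mu>" unfolding d_def using bm[of "pderiv f"] by measurable
  have cint: "integrable \<mu> c" using assms(10) unfolding c_def b_def .
  hence cm: "c \<in> borel_measurable \<mu>" by (rule borel_measurable_integrable)
  have hF': "h (berk_map f \<xi>) = k \<xi>" for \<xi> unfolding h_def k_def z_def by (simp only: hF)
  have distr_eq: "distr \<mu> borel k = distr \<mu> borel h"
  proof (rule measure_eqI)
    show "sets (distr \<mu> borel k) = sets (distr \<mu> borel h)" by simp
    fix A assume "A \<in> sets (distr \<mu> borel k)"
    hence Ab: "A \<in> sets borel" by simp
    have "emeasure (distr \<mu> borel k) A = emeasure \<mu> (k -` A \<inter> space \<mu>)"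
      by (rule emeasure_distr[OF km Ab])
    also have "k -` A \<inter> space \<mu> = berk_map f -` (h -` A \<inter> space \<mu>) \<inter> space \<mu>"
      using berk_map_space sp hF' by auto
    also have "emeasure \<mu> \<dots> = emeasure \<mu> (h -` A \<inter> space \<mu>)"
      using assms(7) measurable_sets[OF hm Ab] unfolding invariant_measure_def by blast
    also have "\<dots> = emeasure (distr \<mu> borel h) A" by (rule emeasure_distr[OF hm Ab, symmetric])
    finally show "emeasure (distr \<mu> borel k) A = emeasure (distr \<mu> borel h) A" .
  qed
  have n2: "degree f \<ge> 2" by (fact assms(5))
  obtain A B where A0: "A > 0" and B0: "B > 0" and AB: "\<forall>s\<in>berkA1 absv.
     s (pderiv f) \<le> A * (max 1 (s [:0,1:]))^(degree f - 1) \<and>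
     B * (max 1 (s [:0,1:]))^(degree f) \<le> max 1 (s f)"
    using key_bound[OF na refl, of f] n2 by auto
  define K where "K = log b (A / B^2)"
  have AEb: "AE \<xi> in \<mu>. norm (h \<xi>) \<le> norm (K - c \<xi>)"
    using assms(9) AE_space
  proof eventually_elim
    case (elim \<xi>)
    then obtain s where \<xi>: "\<xi> = Some s" and s: "s \<in> berkA1 absv"
      using sp unfolding berkP1_def chordal_deriv_def by (cases \<xi>) auto
    have "h \<xi> \<le> \<bar>K - c \<xi>\<bar>"
      unfolding h_def K_def c_def \<xi> z_def bnorm_def option.case
      by (rule pointwise_bound[OF b1 _ n2 A0 B0]) (use elim \<xi> AB s in auto)
    moreover have "h \<xi> \<ge> 0" unfolding h_def using b1 by simp
    ultimately show ?case by simp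
  qed
  have Kint: "integrable \<mu> (\<lambda>\<xi>. K - c \<xi>)" using cint by simp
  have hint: "integrable \<mu> h" by (rule Bochner_Integration.integrable_bound[OF Kint hm AEb])
  have kint: "integrable \<mu> k"
  proof -
    have "integrable (distr \<mu> borel h) (\<lambda>x. x)" using hint hm by (simp add: integrable_distr_eq)
    hence "integrable (distr \<mu> borel k) (\<lambda>x. x)" using distr_eq by simp
    thus ?thesis using km by (simp add: integrable_distr_eq)
  qed
  have kh: "integral\<^sup>L \<mu> k = integral\<^sup>L \<mu> h"
  proof -
    have "integral\<^sup>L \<mu> k = integral\<^sup>L (distr \<mu> borel k) (\<lambda>x. x)" using km by (simp add: integral_distr)
    also have "\<dots> = integral\<^sup>L (distr \<mu> borel h) (\<lambda>x. x)" using distr_eq by simp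
    also have "\<dots> = integral\<^sup>L \<mu> h" using hm by (simp add: integral_distr)
    finally show ?thesis .
  qed
  have AEd: "AE \<xi> in \<mu>. d \<xi> = c \<xi> - 2 * h \<xi> + 2 * k \<xi>"
    using assms(9) AE_space
  proof eventually_elim
    case (elim \<xi>)
    then obtain s where \<xi>: "\<xi> = Some s"
      unfolding chordal_deriv_def by (cases \<xi>) auto
    show ?case
      unfolding h_def k_def c_def d_def \<xi> z_def bnorm_def option.case
      using pointwise_eq[OF b1, of f s] elim \<xi> by simp
  qed
  have eint: "integrable \<mu> (\<lambda>\<xi>. c \<xi> - 2 * h \<xi> + 2 * k \<xi>)" using cint hint kint by simp
  have "integral\<^sup>L \<mu> d = integral\<^sup>L \<mu> (\<lambda>\<xi>. c \<xi> - 2 * h \<xi> + 2 * k \<xi>)"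
    using AEd dm eint by (intro integral_cong_AE) (simp_all add: borel_measurable_integrable)
  also have "\<dots> = integral\<^sup>L \<mu> c - 2 * integral\<^sup>L \<mu> h + 2 * integral\<^sup>L \<mu> k"
    using cint hint kint by simp
  also have "\<dots> = integral\<^sup>L \<mu> c" using kh by simp
  finally show ?thesis unfolding c_def d_def b_def by simp
qed

end
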